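(* Let $n=2k$ with $k\ge 2$. Then $\{d_i : i=1,\ldots,n\}\cup\{a_{i'} : i'=1,\ldots,k\}$ is a strong resolving set of $S_n$.
   Context: For $n\ge 3$, $S_n$ is the graph with vertex set $\{a_i,b_i,c_i,d_i : 1\le i\le n\}$ and edge set $\{a_ia_{i+1}, b_ib_{i+1}, c_ic_{i+1}, d_id_{i+1}, a_{i+1}b_i, a_ib_i, b_ic_i, c_id_i : 1\le i\le n\}$, indices taken modulo $n$. $d$ is the graph distance. A vertex $w$ strongly resolves distinct vertices $u,v$ if $d(v,w)=d(v,u)+d(u,w)$ or $d(u,w)=d(u,v)+d(v,w)$. A set $S$ is a strong resolving set if every two distinct vertices are strongly resolved by some vertex of $S$. *)

theory Defs
  imports Main
begin

text \<open>Vertices of S_n: a_i, b_i, c_i, d_i for 1 <= i <= n, encoded as (kind, i).\<close>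
datatype vkind = A | B | C | D

type_synonym vertex = "vkind \<times> nat"

definition Sverts :: "nat \<Rightarrow> vertex set" where
  "Sverts n = UNIV \<times> {1..n}"

definition nxt :: "nat \<Rightarrow> nat \<Rightarrow> nat" where
  "nxt n i = i mod n + 1"

definition Sgen :: "nat \<Rightarrow> (vertex \<times> vertex) set" where
  "Sgen n = (\<Union>i\<in>{1..n}.
     {((A,i),(A,nxt n i)), ((B,i),(B,nxt n i)), ((C,i),(C,nxt n i)), ((D,i),(D,nxt n i)),
      ((A,nxt n i),(B,i)), ((A,i),(B,i)), ((B,i),(C,i)), ((C,i),(D,i))})"

definition Sadj :: "nat \<Rightarrow> (vertex \<times> vertex) set" where
  "Sadj n = Sgen n \<union> (Sgen n)\<inverse>"

definition Sdist :: "nat \<Rightarrow> vertex \<Rightarrow> vertex \<Rightarrow> nat" where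
  "Sdist n u v = (LEAST k. (u, v) \<in> (Sadj n) ^^ k)"

definition strongly_resolves :: "nat \<Rightarrow> vertex \<Rightarrow> vertex \<Rightarrow> vertex \<Rightarrow> bool" where
  "strongly_resolves n w u v \<longleftrightarrow>
     Sdist n v w = Sdist n v u + Sdist n u w \<or> Sdist n u w = Sdist n u v + Sdist n v w"

definition strong_resolving_set :: "nat \<Rightarrow> vertex set \<Rightarrow> bool" where
  "strong_resolving_set n S \<longleftrightarrow> S \<subseteq> Sverts n \<and>
     (\<forall>u\<in>Sverts n. \<forall>v\<in>Sverts n. u \<noteq> v \<longrightarrow> (\<exists>w\<in>S. strongly_resolves n w u v))"

end

theory Submission
  imports Defs
begin

fun lay :: "vkind \<Rightarrow> nat" where
  "lay A = 3" | "lay B = 2" | "lay C = 1" | "lay D = 0"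

definition dd :: "nat \<Rightarrow> nat \<Rightarrow> nat" where
  "dd i j = (if i \<le> j then j - i else i - j)"

definition cd :: "nat \<Rightarrow> nat \<Rightarrow> nat \<Rightarrow> nat" where
  "cd n i j = min (dd i j) (n - dd i j)"

definition pv :: "nat \<Rightarrow> nat \<Rightarrow> nat" where
  "pv n i = (if i = 1 then n else i - 1)"

fun F :: "nat \<Rightarrow> nat \<Rightarrow> vertex \<Rightarrow> nat" where
  "F n j (A, i) = 3 + min (cd n j i) (cd n j (pv n i))"
| "F n j (B, i) = 2 + cd n j i"
| "F n j (C, i) = 1 + cd n j i"
| "F n j (D, i) = cd n j i"

lemma nxt_eq: "i \<in> {1..n} \<Longrightarrow> nxt n i = (if i = n then 1 else i + 1)"
  by (auto simp: nxt_def)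

lemma cd_nxt:
  assumes "i \<in> {1..n}" "j \<in> {1..n}"
  shows "cd n j (nxt n i) \<le> cd n j i + 1 \<and> cd n j i \<le> cd n j (nxt n i) + 1"
  using assms by (auto simp: nxt_eq cd_def dd_def)

lemma pv_nxt: "i \<in> {1..n} \<Longrightarrow> pv n (nxt n i) = i"
  by (auto simp: nxt_eq pv_def)

lemma nxt_pv: "i \<in> {1..n} \<Longrightarrow> nxt n (pv n i) = i"
  by (auto simp: nxt_def pv_def)

lemma pv_range: "i \<in> {1..n} \<Longrightarrow> pv n i \<in> {1..n}"
  by (auto simp: pv_def)

lemma nxt_range: "i \<in> {1..n} \<Longrightarrow> nxt n i \<in> {1..n}"
  by (auto simp: nxt_eq)

lemma F_lip_gen:
  assumes "(x, y) \<in> Sgen n" "j \<in> {1..n}"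
  shows "F n j y \<le> F n j x + 1 \<and> F n j x \<le> F n j y + 1"
proof -
  from assms(1) obtain i where i: "i \<in> {1..n}" and
    e: "(x,y) \<in> {((A,i),(A,nxt n i)), ((B,i),(B,nxt n i)), ((C,i),(C,nxt n i)), ((D,i),(D,nxt n i)),
      ((A,nxt n i),(B,i)), ((A,i),(B,i)), ((B,i),(C,i)), ((C,i),(D,i))}"
    unfolding Sgen_def by blast
  have c1: "cd n j (nxt n i) \<le> cd n j i + 1" "cd n j i \<le> cd n j (nxt n i) + 1"
    using cd_nxt[OF i assms(2)] by auto
  have c2: "cd n j (pv n i) \<le> cd n j i + 1" "cd n j i \<le> cd n j (pv n i) + 1"
    using cd_nxt[OF pv_range[OF i] assms(2)] nxt_pv[OF i] by auto
  have p: "pv n (nxt n i) = i" using pv_nxt[OF i] .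
  from e show ?thesis using c1 c2 p by auto
qed

lemma Sadj_sym: "(x, y) \<in> Sadj n \<Longrightarrow> (y, x) \<in> Sadj n"
  by (auto simp: Sadj_def)

lemma F_lip: "(x, y) \<in> Sadj n \<Longrightarrow> j \<in> {1..n} \<Longrightarrow> F n j y \<le> F n j x + 1"
  unfolding Sadj_def using F_lip_gen by blast

lemma F_lower: "((D, j), x) \<in> Sadj n ^^ m \<Longrightarrow> j \<in> {1..n} \<Longrightarrow> F n j x \<le> m"
proof (induction m arbitrary: x)
  case 0
  then show ?case by (auto simp: cd_def dd_def)
next
  case (Suc m)
  then obtain y where "((D,j),y) \<in> Sadj n ^^ m" "(y,x) \<in> Sadj n"
    by (meson relpow_Suc_E)
  then show ?case using Suc F_lip[of y x n j] by fastforce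
qed

lemma relpow_sym: "(u, v) \<in> Sadj n ^^ m \<Longrightarrow> (v, u) \<in> Sadj n ^^ m"
proof (induction m arbitrary: v)
  case 0
  then show ?case by simp
next
  case (Suc m)
  then obtain y where "(u,y) \<in> Sadj n ^^ m" "(y,v) \<in> Sadj n"
    by (meson relpow_Suc_E)
  then show ?case using Suc Sadj_sym relpow_Suc_I2 by metis
qed

lemma Sdist_sym: "Sdist n u v = Sdist n v u"
  unfolding Sdist_def using relpow_sym by metis

definition dle :: "nat \<Rightarrow> vertex \<Rightarrow> vertex \<Rightarrow> nat \<Rightarrow> bool" where
  "dle n u v m \<longleftrightarrow> (\<exists>m'\<le>m. (u, v) \<in> Sadj n ^^ m')"

lemma dle_refl: "dle n u u m"
  unfolding dle_def by (rule exI[of _ 0]) simp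

lemma dle_edge: "(u, v) \<in> Sadj n \<Longrightarrow> dle n u v 1"
  unfolding dle_def by (rule exI[of _ 1]) simp

lemma dle_gen: "(u, v) \<in> Sgen n \<Longrightarrow> dle n u v 1"
  by (rule dle_edge) (simp add: Sadj_def)

lemma dle_gen': "(v, u) \<in> Sgen n \<Longrightarrow> dle n u v 1"
  by (rule dle_edge) (simp add: Sadj_def)

lemma dle_trans: "dle n u v a \<Longrightarrow> dle n v w b \<Longrightarrow> dle n u w (a + b)"
  unfolding dle_def
proof (elim exE conjE)
  fix a' b' assume "a' \<le> a" "(u, v) \<in> Sadj n ^^ a'" "b' \<le> b" "(v, w) \<in> Sadj n ^^ b'"
  then show "\<exists>m'\<le>a + b. (u, w) \<in> Sadj n ^^ m'"
    by (intro exI[of _ "a' + b'"]) (auto simp: relpow_add)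
qed

lemma dle_mono: "dle n u v a \<Longrightarrow> a \<le> b \<Longrightarrow> dle n u v b"
  unfolding dle_def by (meson order_trans)

lemma dle_sym: "dle n u v a \<Longrightarrow> dle n v u a"
  unfolding dle_def using relpow_sym by blast

lemma Sdist_le: "dle n u v m \<Longrightarrow> Sdist n u v \<le> m"
  unfolding dle_def Sdist_def by (meson Least_le order_trans)

lemma Sdist_walk: "dle n u v m \<Longrightarrow> (u, v) \<in> Sadj n ^^ Sdist n u v"
  unfolding dle_def Sdist_def by (meson LeastI)

lemma Sdist_tri: "dle n u v a \<Longrightarrow> dle n v w b \<Longrightarrow> Sdist n u w \<le> Sdist n u v + Sdist n v w"
proof -
  assume a: "dle n u v a" and b: "dle n v w b"
  have "(u, w) \<in> Sadj n ^^ (Sdist n u v + Sdist n v w)"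
    using Sdist_walk[OF a] Sdist_walk[OF b] by (auto simp: relpow_add)
  then show ?thesis unfolding Sdist_def by (rule Least_le)
qed

lemma Sdist_lower: "dle n (D, j) x m \<Longrightarrow> j \<in> {1..n} \<Longrightarrow> F n j x \<le> Sdist n (D, j) x"
  using Sdist_walk F_lower by blast

lemma Sdist_0: "Sdist n u u = 0"
  unfolding Sdist_def by simp


lemma gen_ring: "i \<in> {1..n} \<Longrightarrow> ((X,i),(X,nxt n i)) \<in> Sgen n"
  unfolding Sgen_def by (cases X; rule UN_I[of i]) auto

lemma gen_AB: "i \<in> {1..n} \<Longrightarrow> ((A,i),(B,i)) \<in> Sgen n"
  unfolding Sgen_def by (rule UN_I[of i]) auto

lemma gen_AB2: "i \<in> {1..n} \<Longrightarrow> ((A,nxt n i),(B,i)) \<in> Sgen n"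
  unfolding Sgen_def by (rule UN_I[of i]) auto

lemma gen_BC: "i \<in> {1..n} \<Longrightarrow> ((B,i),(C,i)) \<in> Sgen n"
  unfolding Sgen_def by (rule UN_I[of i]) auto

lemma gen_CD: "i \<in> {1..n} \<Longrightarrow> ((C,i),(D,i)) \<in> Sgen n"
  unfolding Sgen_def by (rule UN_I[of i]) auto

lemma ring_fwd: "1 \<le> i \<Longrightarrow> i + t \<le> n \<Longrightarrow> dle n (X,i) (X,i+t) t"
proof (induction t)
  case 0
  then show ?case by (simp add: dle_refl)
next
  case (Suc t)
  have "dle n (X,i) (X,i+t) t" using Suc by simp
  moreover have "nxt n (i+t) = i + Suc t" using Suc by (simp add: nxt_def)
  then have "dle n (X,i+t) (X,i+Suc t) 1"
    using gen_ring[of "i+t" n X] Suc dle_gen by fastforce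
  ultimately show ?case using dle_trans by fastforce
qed

lemma ring_fwd': "1 \<le> i \<Longrightarrow> i \<le> j \<Longrightarrow> j \<le> n \<Longrightarrow> dle n (X,i) (X,j) (j - i)"
  using ring_fwd[of i "j - i" n X] by simp

lemma ring_wrap: "1 \<le> n \<Longrightarrow> dle n (X,n) (X,1) 1"
  using gen_ring[of n n X] dle_gen by (simp add: nxt_def)

lemma ring_le: "i \<le> j \<Longrightarrow> i \<in> {1..n} \<Longrightarrow> j \<in> {1..n} \<Longrightarrow> dle n (X,i) (X,j) (cd n i j)"
proof -
  assume h: "i \<le> j" "i \<in> {1..n}" "j \<in> {1..n}"
  have f: "dle n (X,i) (X,j) (j - i)" using h ring_fwd' by auto
  have "dle n (X,i) (X,1) (i - 1)" using h ring_fwd'[of 1 i n X] dle_sym by auto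
  moreover have "dle n (X,1) (X,n) 1" using h ring_wrap dle_sym by auto
  moreover have "dle n (X,n) (X,j) (n - j)" using h ring_fwd'[of j n n X] dle_sym by auto
  ultimately have "dle n (X,i) (X,j) (i - 1 + 1 + (n - j))" using dle_trans by blast
  moreover have "i - 1 + 1 + (n - j) = n - (j - i)" using h by auto
  ultimately have b: "dle n (X,i) (X,j) (n - (j - i))" by metis
  show ?thesis using f b h unfolding cd_def dd_def by (cases "j - i \<le> n - (j - i)") (auto simp: min_def)
qed

lemma cd_sym: "cd n i j = cd n j i"
  by (auto simp: cd_def dd_def)

lemma ring: "i \<in> {1..n} \<Longrightarrow> j \<in> {1..n} \<Longrightarrow> dle n (X,i) (X,j) (cd n i j)"
  using ring_le[of i j n X] ring_le[of j i n X] dle_sym cd_sym by (cases "i \<le> j") auto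

lemma radial: "i \<in> {1..n} \<Longrightarrow> X \<noteq> A \<Longrightarrow> Y \<noteq> A \<Longrightarrow> lay X \<le> lay Y \<Longrightarrow> dle n (X,i) (Y,i) (lay Y - lay X)"
proof -
  assume h: "i \<in> {1..n}" "X \<noteq> A" "Y \<noteq> A" "lay X \<le> lay Y"
  have dc: "dle n (D,i) (C,i) 1" using gen_CD[OF h(1)] dle_gen' by blast
  have cb: "dle n (C,i) (B,i) 1" using gen_BC[OF h(1)] dle_gen' by blast
  have db: "dle n (D,i) (B,i) 2" using dle_trans[OF dc cb] by (simp add: numeral_2_eq_2)
  show ?thesis using h dc cb db dle_refl by (cases X; cases Y) auto
qed

lemma toA: "i \<in> {1..n} \<Longrightarrow> X \<noteq> A \<Longrightarrow> dle n (X,i) (A,i) (3 - lay X) \<and> dle n (X, pv n i) (A,i) (3 - lay X)"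
proof -
  assume h: "i \<in> {1..n}" "X \<noteq> A"
  have p: "pv n i \<in> {1..n}" using pv_range h by auto
  have ba: "dle n (B,i) (A,i) 1" using gen_AB[OF h(1)] dle_gen' by blast
  have ba2: "dle n (B,pv n i) (A,i) 1" using gen_AB2[OF p] dle_gen' nxt_pv[OF h(1)] by fastforce
  have r1: "dle n (X,i) (B,i) (2 - lay X)" using radial[OF h(1) h(2), of B] h by (cases X) auto
  have r2: "dle n (X,pv n i) (B,pv n i) (2 - lay X)" using radial[OF p h(2), of B] h by (cases X) auto
  have "2 - lay X + 1 = 3 - lay X" using h by (cases X) auto
  then show ?thesis using dle_trans[OF r1 ba] dle_trans[OF r2 ba2] by simp
qed


lemma cd_self: "cd n i i = 0"
  by (simp add: cd_def dd_def)

lemma upG: "i \<in> {1..n} \<Longrightarrow> i' \<in> {1..n} \<Longrightarrow> X \<noteq> A \<Longrightarrow> lay X \<le> lay Y \<Longrightarrow>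
  dle n (X,i) (Y,i') (if Y = A then 3 - lay X + min (cd n i i') (cd n i (pv n i'))
                      else cd n i i' + (lay Y - lay X))"
proof -
  assume h: "i \<in> {1..n}" "i' \<in> {1..n}" "X \<noteq> A" "lay X \<le> lay Y"
  show ?thesis
  proof (cases "Y = A")
    case True
    have p: "pv n i' \<in> {1..n}" using pv_range h by auto
    have a1: "dle n (X,i) (A,i') (cd n i i' + (3 - lay X))"
      using dle_trans[OF ring[OF h(1) h(2), of X] conjunct1[OF toA[OF h(2) h(3)]]] .
    have a2: "dle n (X,i) (A,i') (cd n i (pv n i') + (3 - lay X))"
      using dle_trans[OF ring[OF h(1) p, of X] conjunct2[OF toA[OF h(2) h(3)]]] .
    show ?thesis using True a1 a2
      by (cases "cd n i i' \<le> cd n i (pv n i')") (auto simp: min_def add.commute)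
  next
    case False
    then show ?thesis using dle_trans[OF ring[OF h(1) h(2), of X] radial[OF h(2) h(3) False h(4)]] by simp
  qed
qed

lemma R1: "i \<in> {1..n} \<Longrightarrow> i' \<in> {1..n} \<Longrightarrow> X \<noteq> A \<Longrightarrow> lay X \<le> lay Y \<Longrightarrow>
  strongly_resolves n (D,i) (Y,i') (X,i)"
proof -
  assume h: "i \<in> {1..n}" "i' \<in> {1..n}" "X \<noteq> A" "lay X \<le> lay Y"
  define g where "g = (if Y = A then 3 - lay X + min (cd n i i') (cd n i (pv n i'))
                      else cd n i i' + (lay Y - lay X))"
  have vu: "dle n (X,i) (Y,i') g" using upG[OF h] g_def by simp
  have wv: "dle n (D,i) (X,i) (lay X)" using radial[OF h(1), of D X] h by (cases X) auto
  have vw: "dle n (X,i) (D,i) (lay X)" using dle_sym[OF wv] .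
  have wu: "dle n (D,i) (Y,i') (lay X + g)" using dle_trans[OF wv vu] .
  have uv: "dle n (Y,i') (X,i) g" using dle_sym[OF vu] .
  have e1: "Sdist n (X,i) (D,i) = lay X"
  proof -
    have "Sdist n (X,i) (D,i) \<le> lay X" using Sdist_le[OF vw] .
    moreover have "F n i (X,i) \<le> Sdist n (D,i) (X,i)" using Sdist_lower[OF wv h(1)] .
    moreover have "F n i (X,i) = lay X" using h(3) by (cases X) (auto simp: cd_self)
    ultimately show ?thesis using Sdist_sym by (metis le_antisym)
  qed
  have e2: "Sdist n (Y,i') (X,i) \<le> g" using Sdist_le[OF uv] .
  have e3: "F n i (Y,i') \<le> Sdist n (Y,i') (D,i)" using Sdist_lower[OF wu h(1)] Sdist_sym by metis
  have e4: "F n i (Y,i') = lay X + g" using h(3,4) unfolding g_def by (cases Y; cases X) auto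
  have e5: "Sdist n (Y,i') (D,i) \<le> Sdist n (Y,i') (X,i) + Sdist n (X,i) (D,i)"
    using Sdist_tri[OF uv vw] .
  have "Sdist n (Y,i') (D,i) = Sdist n (Y,i') (X,i) + Sdist n (X,i) (D,i)"
    using e1 e2 e3 e4 e5 by linarith
  then show ?thesis unfolding strongly_resolves_def by blast
qed

lemma R2: "2 \<le> i' \<Longrightarrow> i' < i \<Longrightarrow> i \<le> n \<Longrightarrow> 2 * (i - i') + 2 \<le> n \<Longrightarrow>
  strongly_resolves n (D,i) (A,i') (A,i)"
proof -
  assume h: "2 \<le> i'" "i' < i" "i \<le> n" "2 * (i - i') + 2 \<le> n"
  have i: "i \<in> {1..n}" "i' \<in> {1..n}" using h by auto
  have vw: "dle n (A,i) (D,i) 3" using dle_sym[OF conjunct1[OF toA[OF i(1), of D]]] by simp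
  have wv: "dle n (D,i) (A,i) 3" using dle_sym[OF vw] .
  have uv: "dle n (A,i') (A,i) (i - i')" using ring_fwd'[of i' i n A] h by simp
  have wu: "dle n (D,i) (A,i') (3 + (i - i'))" using dle_trans[OF wv dle_sym[OF uv]] .
  have e1: "Sdist n (A,i) (D,i) = 3"
  proof -
    have "Sdist n (A,i) (D,i) \<le> 3" using Sdist_le[OF vw] .
    moreover have "F n i (A,i) \<le> Sdist n (D,i) (A,i)" using Sdist_lower[OF wv i(1)] .
    moreover have "F n i (A,i) = 3" by (simp add: cd_self)
    ultimately show ?thesis using Sdist_sym by (metis le_antisym)
  qed
  have e2: "Sdist n (A,i') (A,i) \<le> i - i'" using Sdist_le[OF uv] .
  have e3: "F n i (A,i') \<le> Sdist n (A,i') (D,i)" using Sdist_lower[OF wu i(1)] Sdist_sym by metis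
  have e4: "F n i (A,i') = 3 + (i - i')" using h by (auto simp: cd_def dd_def pv_def)
  have e5: "Sdist n (A,i') (D,i) \<le> Sdist n (A,i') (A,i) + Sdist n (A,i) (D,i)"
    using Sdist_tri[OF uv vw] .
  have "Sdist n (A,i') (D,i) = Sdist n (A,i') (A,i) + Sdist n (A,i) (D,i)"
    using e1 e2 e3 e4 e5 by linarith
  then show ?thesis unfolding strongly_resolves_def by blast
qed

lemma sr_self: "strongly_resolves n u u v"
  unfolding strongly_resolves_def by (simp add: Sdist_0)

lemma sr_swap: "strongly_resolves n w u v = strongly_resolves n w v u"
  unfolding strongly_resolves_def by blast


theorem lemma3p12:
  fixes n k :: nat
  assumes "n = 2 * k" and "k \<ge> 2"
  shows "strong_resolving_set n ({(D, i) | i. i \<in> {1..n}} \<union> {(A, i') | i'. i' \<in> {1..k}})"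
proof -
  define S where "S = ({(D, i) | i. i \<in> {1..n}} \<union> {(A, i') | i'. i' \<in> {1..k}})"
  have sub: "S \<subseteq> Sverts n" using assms unfolding S_def Sverts_def by auto
  have main: "\<exists>w\<in>S. strongly_resolves n w u v" if hu: "u \<in> Sverts n" and hv: "v \<in> Sverts n"
    and ne: "u \<noteq> v" for u v
  proof -
    obtain X i where u: "u = (X,i)" by (cases u)
    obtain Y j where v: "v = (Y,j)" by (cases v)
    have i: "i \<in> {1..n}" using hu u by (auto simp: Sverts_def)
    have j: "j \<in> {1..n}" using hv v by (auto simp: Sverts_def)
    show ?thesis
    proof (cases "u \<in> S")
      case True
      then show ?thesis using sr_self by blast
    next
      case nu: False
      show ?thesis
      proof (cases "v \<in> S")
        case True
        then show ?thesis using sr_self sr_swap by blast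
      next
        case nv: False
        have wi: "(D,i) \<in> S" "(D,j) \<in> S" using i j unfolding S_def by auto
        show ?thesis
        proof (cases "Y \<noteq> A \<and> lay Y \<le> lay X")
          case True
          then show ?thesis using R1[OF j i, of Y X] wi u v by blast
        next
          case c1: False
          show ?thesis
          proof (cases "X \<noteq> A \<and> lay X \<le> lay Y")
            case True
            then show ?thesis using R1[OF i j, of X Y] wi u v sr_swap by blast
          next
            case c2: False
            have XA: "X = A" "Y = A" using c1 c2 by (cases X; cases Y; auto)+
            have ik: "i > k" "j > k" using nu nv XA u v i j unfolding S_def by auto
            have "i \<noteq> j" using ne u v XA by auto
            then show ?thesis
            proof (cases "j < i")
              case True
              have "strongly_resolves n (D,i) (A,j) (A,i)"
                using R2[of j i n] True ik i assms by auto
              then show ?thesis using wi u v XA sr_swap by blast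
            next
              case False
              then have "i < j" using \<open>i \<noteq> j\<close> by simp
              have "strongly_resolves n (D,j) (A,i) (A,j)"
                using R2[of i j n] \<open>i < j\<close> ik j assms by auto
              then show ?thesis using wi u v XA by blast
            qed
          qed
        qed
      qed
    qed
  qed
  show ?thesis unfolding strong_resolving_set_def S_def[symmetric] using sub main by blast
qed

end
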